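(* Let $T$ be an almost reduced linear trellis with $C(T)=C$. If $T$ is mergeable, then by merging vertices of $T$ one obtains a linear trellis $T'$ with $C(T')=C$ that is smaller than $T$.
   Context: Let $\mathbb{F}$ be a finite field and $n\ge1$; indices are taken in $\mathbb{Z}_n$. A trellis $T$ of length $n$ over $\mathbb{F}$ consists of pairwise disjoint finite vertex sets $V_i(T)$, $i\in\mathbb{Z}_n$, and edge sets $E_i(T)\subseteq V_i(T)\times\mathbb{F}\times V_{i+1}(T)$; $(v,\alpha,w)\in E_i(T)$ is an edge from $v$ to $w$ with label $\alpha$. Trellises are trim (each vertex has an outgoing and an incoming edge). $T$ is linear if each $V_i(T)$ is an $\mathbb{F}$-vector space and each $E_i(T)$ a subspace of $V_i(T)\times\mathbb{F}\times V_{i+1}(T)$. A cycle is a closed path of length $n$ starting (and ending) at a vertex of $V_0(T)$; $C(T)\subseteq\mathbb{F}^n$ is the set of label sequences of cycles. $T$ is almost reduced if every vertex lies on some cycle. Merging two vertices $v\ne w$ of the same $V_i(T)$ means identifying them into one vertex (keeping all edges). $T$ is mergeable if there exist $i$ and $v\ne w\in V_i(T)$ such that the trellis obtained by merging $v$ and $w$ represents the same code as $T$. A trellis $T'$ of length $n$ is smaller than $T$ if $|V_i(T')|\le|V_i(T)|$ for all $i$ with at least one strict inequality. *)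

theory Defs
  imports Main
begin

text \<open>A trellis of length n is given by vertex sets V i and edge sets E i for i < n
  (indices in Z_n are represented by 0..n-1, with successor Suc i mod n).\<close>

definition trellis :: "nat \<Rightarrow> (nat \<Rightarrow> 'v set) \<Rightarrow> (nat \<Rightarrow> ('v \<times> 'a \<times> 'v) set) \<Rightarrow> bool" where
  "trellis n V E \<longleftrightarrow> n \<ge> 1
     \<and> (\<forall>i<n. finite (V i))
     \<and> (\<forall>i<n. \<forall>j<n. i \<noteq> j \<longrightarrow> V i \<inter> V j = {})
     \<and> (\<forall>i<n. E i \<subseteq> V i \<times> UNIV \<times> V (Suc i mod n))
     \<and> (\<forall>i<n. \<forall>v\<in>V i. (\<exists>a w. (v, a, w) \<in> E i)
                      \<and> (\<exists>u a. (u, a, v) \<in> E ((i + n - 1) mod n)))"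

definition vs_on :: "'v set \<Rightarrow> ('v \<Rightarrow> 'v \<Rightarrow> 'v) \<Rightarrow> ('a::field \<Rightarrow> 'v \<Rightarrow> 'v) \<Rightarrow> 'v \<Rightarrow> bool" where
  "vs_on A add sm z \<longleftrightarrow> z \<in> A
     \<and> (\<forall>x\<in>A. \<forall>y\<in>A. add x y \<in> A)
     \<and> (\<forall>c. \<forall>x\<in>A. sm c x \<in> A)
     \<and> (\<forall>x\<in>A. \<forall>y\<in>A. \<forall>u\<in>A. add (add x y) u = add x (add y u))
     \<and> (\<forall>x\<in>A. \<forall>y\<in>A. add x y = add y x)
     \<and> (\<forall>x\<in>A. add z x = x)
     \<and> (\<forall>x\<in>A. \<exists>y\<in>A. add x y = z)
     \<and> (\<forall>c. \<forall>x\<in>A. \<forall>y\<in>A. sm c (add x y) = add (sm c x) (sm c y))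
     \<and> (\<forall>c d. \<forall>x\<in>A. sm (c + d) x = add (sm c x) (sm d x))
     \<and> (\<forall>c d. \<forall>x\<in>A. sm (c * d) x = sm c (sm d x))
     \<and> (\<forall>x\<in>A. sm 1 x = x)"

definition linear_trellis :: "nat \<Rightarrow> (nat \<Rightarrow> 'v set) \<Rightarrow> (nat \<Rightarrow> ('v \<times> 'a::field \<times> 'v) set) \<Rightarrow> bool" where
  "linear_trellis n V E \<longleftrightarrow> trellis n V E \<and>
     (\<exists>(add :: nat \<Rightarrow> 'v \<Rightarrow> 'v \<Rightarrow> 'v) (sm :: nat \<Rightarrow> 'a \<Rightarrow> 'v \<Rightarrow> 'v) (z :: nat \<Rightarrow> 'v).
        \<forall>i<n. vs_on (V i) (add i) (sm i) (z i)
          \<and> (z i, 0, z (Suc i mod n)) \<in> E i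
          \<and> (\<forall>v a w v' a' w'. (v, a, w) \<in> E i \<longrightarrow> (v', a', w') \<in> E i \<longrightarrow>
                (add i v v', a + a', add (Suc i mod n) w w') \<in> E i)
          \<and> (\<forall>c v a w. (v, a, w) \<in> E i \<longrightarrow>
                (sm i c v, c * a, sm (Suc i mod n) c w) \<in> E i))"

definition is_cycle :: "nat \<Rightarrow> (nat \<Rightarrow> ('v \<times> 'a \<times> 'v) set) \<Rightarrow> 'v list \<Rightarrow> 'a list \<Rightarrow> bool" where
  "is_cycle n E vs c \<longleftrightarrow> length vs = n \<and> length c = n
     \<and> (\<forall>j<n. (vs ! j, c ! j, vs ! (Suc j mod n)) \<in> E j)"

definition code :: "nat \<Rightarrow> (nat \<Rightarrow> ('v \<times> 'a \<times> 'v) set) \<Rightarrow> 'a list set" where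
  "code n E = {c. \<exists>vs. is_cycle n E vs c}"

definition almost_reduced :: "nat \<Rightarrow> (nat \<Rightarrow> 'v set) \<Rightarrow> (nat \<Rightarrow> ('v \<times> 'a \<times> 'v) set) \<Rightarrow> bool" where
  "almost_reduced n V E \<longleftrightarrow> (\<forall>i<n. \<forall>v\<in>V i. \<exists>vs c. is_cycle n E vs c \<and> vs ! i = v)"

definition merge_vertices :: "(nat \<Rightarrow> 'v set) \<Rightarrow> (nat \<Rightarrow> ('v \<times> 'a \<times> 'v) set) \<Rightarrow> 'v \<Rightarrow> 'v
     \<Rightarrow> (nat \<Rightarrow> 'v set) \<times> (nat \<Rightarrow> ('v \<times> 'a \<times> 'v) set)" where
  "merge_vertices V E v w =
     (let f = (\<lambda>x. if x = v then w else x)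
      in (\<lambda>j. f ` V j, \<lambda>j. (\<lambda>(x, a, y). (f x, a, f y)) ` E j))"

definition mergeable :: "nat \<Rightarrow> (nat \<Rightarrow> 'v set) \<Rightarrow> (nat \<Rightarrow> ('v \<times> 'a \<times> 'v) set) \<Rightarrow> bool" where
  "mergeable n V E \<longleftrightarrow> (\<exists>i<n. \<exists>v\<in>V i. \<exists>w\<in>V i. v \<noteq> w \<and>
      code n (snd (merge_vertices V E v w)) = code n E)"

definition merge_step :: "nat \<Rightarrow> (nat \<Rightarrow> 'v set) \<times> (nat \<Rightarrow> ('v \<times> 'a \<times> 'v) set)
     \<Rightarrow> (nat \<Rightarrow> 'v set) \<times> (nat \<Rightarrow> ('v \<times> 'a \<times> 'v) set) \<Rightarrow> bool" where
  "merge_step n T T' \<longleftrightarrow> (\<exists>i<n. \<exists>v\<in>fst T i. \<exists>w\<in>fst T i. v \<noteq> w \<and>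
      T' = merge_vertices (fst T) (snd T) v w)"

definition smaller :: "nat \<Rightarrow> (nat \<Rightarrow> 'v set) \<Rightarrow> (nat \<Rightarrow> 'w set) \<Rightarrow> bool" where
  "smaller n V' V \<longleftrightarrow> (\<forall>i<n. card (V' i) \<le> card (V i)) \<and> (\<exists>i<n. card (V' i) < card (V i))"

end

theory Submission
  imports Defs
begin


locale vsp =
  fixes A :: "'v set" and ad :: "'v \<Rightarrow> 'v \<Rightarrow> 'v" and s :: "'a::field \<Rightarrow> 'v \<Rightarrow> 'v" and zz :: 'v
  assumes vs: "vs_on A ad s zz"
begin
lemma V: "zz \<in> A
     \<and> (\<forall>x\<in>A. \<forall>y\<in>A. ad x y \<in> A)
     \<and> (\<forall>c. \<forall>x\<in>A. s c x \<in> A)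
     \<and> (\<forall>x\<in>A. \<forall>y\<in>A. \<forall>u\<in>A. ad (ad x y) u = ad x (ad y u))
     \<and> (\<forall>x\<in>A. \<forall>y\<in>A. ad x y = ad y x)
     \<and> (\<forall>x\<in>A. ad zz x = x)
     \<and> (\<forall>x\<in>A. \<exists>y\<in>A. ad x y = zz)
     \<and> (\<forall>c. \<forall>x\<in>A. \<forall>y\<in>A. s c (ad x y) = ad (s c x) (s c y))
     \<and> (\<forall>c d. \<forall>x\<in>A. s (c + d) x = ad (s c x) (s d x))
     \<and> (\<forall>c d. \<forall>x\<in>A. s (c * d) x = s c (s d x))
     \<and> (\<forall>x\<in>A. s 1 x = x)" using vs unfolding vs_on_def .
lemma zin: "zz \<in> A" using V by (rule conjunct1)
lemma ad_cl: "x \<in> A \<Longrightarrow> y \<in> A \<Longrightarrow> ad x y \<in> A" using V[THEN conjunct2, THEN conjunct1] by blast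
lemma s_cl: "x \<in> A \<Longrightarrow> s c x \<in> A" using V[THEN conjunct2, THEN conjunct2, THEN conjunct1] by blast
lemma assoc: "x \<in> A \<Longrightarrow> y \<in> A \<Longrightarrow> u \<in> A \<Longrightarrow> ad (ad x y) u = ad x (ad y u)"
  using V[THEN conjunct2, THEN conjunct2, THEN conjunct2, THEN conjunct1] by blast
lemma comm: "x \<in> A \<Longrightarrow> y \<in> A \<Longrightarrow> ad x y = ad y x"
  using V[THEN conjunct2, THEN conjunct2, THEN conjunct2, THEN conjunct2, THEN conjunct1] by blast
lemma zl: "x \<in> A \<Longrightarrow> ad zz x = x"
  using V[THEN conjunct2, THEN conjunct2, THEN conjunct2, THEN conjunct2, THEN conjunct2, THEN conjunct1] by blast
lemma inv: "x \<in> A \<Longrightarrow> \<exists>y\<in>A. ad x y = zz"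
  using V[THEN conjunct2, THEN conjunct2, THEN conjunct2, THEN conjunct2, THEN conjunct2, THEN conjunct2, THEN conjunct1] by blast
lemma dist1: "x \<in> A \<Longrightarrow> y \<in> A \<Longrightarrow> s c (ad x y) = ad (s c x) (s c y)"
  using V[THEN conjunct2, THEN conjunct2, THEN conjunct2, THEN conjunct2, THEN conjunct2, THEN conjunct2, THEN conjunct2, THEN conjunct1] by blast
lemma dist2: "x \<in> A \<Longrightarrow> s (c + d) x = ad (s c x) (s d x)"
  using V[THEN conjunct2, THEN conjunct2, THEN conjunct2, THEN conjunct2, THEN conjunct2, THEN conjunct2, THEN conjunct2, THEN conjunct2, THEN conjunct1] by blast
lemma smul: "x \<in> A \<Longrightarrow> s (c * d) x = s c (s d x)"
  using V[THEN conjunct2, THEN conjunct2, THEN conjunct2, THEN conjunct2, THEN conjunct2, THEN conjunct2, THEN conjunct2, THEN conjunct2, THEN conjunct2, THEN conjunct1] by blast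
lemma s1: "x \<in> A \<Longrightarrow> s 1 x = x"
  using V[THEN conjunct2, THEN conjunct2, THEN conjunct2, THEN conjunct2, THEN conjunct2, THEN conjunct2, THEN conjunct2, THEN conjunct2, THEN conjunct2, THEN conjunct2] by blast
lemma zr: "x \<in> A \<Longrightarrow> ad x zz = x" using comm[OF _ zin] zl by simp

lemma s0: assumes x: "x \<in> A" shows "s 0 x = zz"
proof -
  let ?t = "s 0 x"
  have t: "?t \<in> A" using s_cl x .
  have tt: "ad ?t ?t = ?t" using dist2[OF x, of 0 0] by simp
  obtain y where y: "y \<in> A" "ad ?t y = zz" using inv[OF t] by blast
  have "zz = ad (ad ?t ?t) y" using y(2) by (simp add: tt)
  also have "\<dots> = ad ?t (ad ?t y)" using assoc t y by blast
  also have "\<dots> = ?t" using y zr t by simp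
  finally show ?thesis by simp
qed

lemma neg: assumes x: "x \<in> A" shows "ad x (s (-1) x) = zz"
proof -
  have "s (1 + -1) x = ad (s 1 x) (s (-1) x)" by (rule dist2[OF x])
  then show ?thesis using s1[OF x] s0[OF x] by simp
qed

lemma comb: "x \<in> A \<Longrightarrow> d \<in> A \<Longrightarrow> ad (ad x (s k d)) (s k' d) = ad x (s (k + k') d)"
  by (simp add: assoc s_cl dist2)

lemma shuf: "x \<in> A \<Longrightarrow> y \<in> A \<Longrightarrow> a \<in> A \<Longrightarrow> b \<in> A \<Longrightarrow>
   ad (ad x a) (ad y b) = ad (ad x y) (ad a b)"
proof -
  assume h: "x \<in> A" "y \<in> A" "a \<in> A" "b \<in> A"
  have "ad (ad x a) (ad y b) = ad x (ad a (ad y b))" using h by (simp add: assoc ad_cl)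
  also have "\<dots> = ad x (ad (ad a y) b)" using h by (simp add: assoc ad_cl)
  also have "\<dots> = ad x (ad (ad y a) b)" using h comm[of a y] by simp
  also have "\<dots> = ad (ad x y) (ad a b)" using h by (simp add: assoc ad_cl)
  finally show ?thesis .
qed

lemma sub_cancel: "w \<in> A \<Longrightarrow> v \<in> A \<Longrightarrow> ad w (ad v (s (-1) w)) = v"
proof -
  assume h: "w \<in> A" "v \<in> A"
  have "ad w (ad v (s (-1) w)) = ad w (ad (s (-1) w) v)" using h comm[of v "s (-1) w"] s_cl by simp
  also have "\<dots> = ad (ad w (s (-1) w)) v" using h by (simp add: assoc s_cl)
  also have "\<dots> = v" using h neg zl by simp
  finally show ?thesis .
qed

definition cs :: "'v \<Rightarrow> 'v \<Rightarrow> 'v set" where "cs d x = {y. \<exists>k. y = ad x (s k d)}"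
definition pr :: "'v \<Rightarrow> 'v \<Rightarrow> 'v" where "pr d x = (SOME y. y \<in> cs d x)"

lemma cs_self: "x \<in> A \<Longrightarrow> d \<in> A \<Longrightarrow> x \<in> cs d x"
proof -
  assume h: "x \<in> A" "d \<in> A"
  have "x = ad x (s 0 d)" using h s0 zr by simp
  then show ?thesis unfolding cs_def by blast
qed

lemma cs_sub: "x \<in> A \<Longrightarrow> d \<in> A \<Longrightarrow> y \<in> cs d x \<Longrightarrow> y \<in> A"
  unfolding cs_def using ad_cl s_cl by blast

lemma cs_eq: assumes x: "x \<in> A" and d: "d \<in> A" and y: "y \<in> cs d x" shows "cs d y = cs d x"
proof -
  obtain k where k: "y = ad x (s k d)" using y unfolding cs_def by blast
  show ?thesis
  proof
    show "cs d y \<subseteq> cs d x" unfolding cs_def using comb[OF x d] k by auto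
    show "cs d x \<subseteq> cs d y"
    proof
      fix u assume "u \<in> cs d x"
      then obtain k' where k': "u = ad x (s k' d)" unfolding cs_def by blast
      have "ad y (s (k' - k) d) = u" using comb[OF x d, of k "k' - k"] k k' by simp
      then show "u \<in> cs d y" unfolding cs_def by blast
    qed
  qed
qed

lemma cs_add: assumes "a \<in> A" "b \<in> A" "d \<in> A" "a' \<in> cs d a" "b' \<in> cs d b"
  shows "ad a' b' \<in> cs d (ad a b)"
proof -
  obtain k k' where "a' = ad a (s k d)" "b' = ad b (s k' d)" using assms unfolding cs_def by blast
  then have "ad a' b' = ad (ad a b) (ad (s k d) (s k' d))"
    using shuf[of a b "s k d" "s k' d"] assms s_cl by simp
  also have "\<dots> = ad (ad a b) (s (k + k') d)" using dist2 assms by simp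
  finally have "ad a' b' = ad (ad a b) (s (k + k') d)" .
  then show ?thesis unfolding cs_def by blast
qed

lemma cs_sm: assumes "a \<in> A" "d \<in> A" "a' \<in> cs d a"
  shows "s c a' \<in> cs d (s c a)"
proof -
  obtain k where "a' = ad a (s k d)" using assms unfolding cs_def by blast
  then have "s c a' = ad (s c a) (s (c * k) d)"
    using dist1 assms s_cl smul by simp
  then show ?thesis unfolding cs_def by blast
qed

lemma pr_in: assumes "x \<in> A" "d \<in> A" shows "pr d x \<in> cs d x"
  unfolding pr_def by (rule someI[of _ x]) (rule cs_self[OF assms])

lemma pr_A: "x \<in> A \<Longrightarrow> d \<in> A \<Longrightarrow> pr d x \<in> A"
  using pr_in cs_sub by blast

lemma pr_eq: assumes "x \<in> A" "d \<in> A" "y \<in> cs d x" shows "pr d y = pr d x"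
proof -
  have "cs d y = cs d x" by (rule cs_eq[OF assms])
  then show ?thesis unfolding pr_def by simp
qed

lemma pr_idem: assumes "x \<in> A" "d \<in> A" shows "pr d (pr d x) = pr d x"
  by (rule pr_eq[OF assms pr_in[OF assms]])

lemma pr_inv: assumes x: "x \<in> A" and y: "y \<in> A" and d: "d \<in> A" and e: "pr d x = pr d y"
  shows "y \<in> cs d x"
proof -
  have "cs d (pr d x) = cs d x" by (rule cs_eq[OF x d pr_in[OF x d]])
  moreover have "cs d (pr d y) = cs d y" by (rule cs_eq[OF y d pr_in[OF y d]])
  ultimately have "cs d x = cs d y" using e by simp
  then show ?thesis using cs_self[OF y d] by simp
qed
end

lemma vs_image:
  assumes vs: "vs_on A ad s zz"
    and ha: "\<forall>a\<in>A. \<forall>b\<in>A. ad' (g a) (g b) = g (ad a b)"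
    and hs: "\<forall>c. \<forall>a\<in>A. s' c (g a) = g (s c a)"
    and hz: "zz' = g zz"
  shows "vs_on (g ` A) ad' s' zz'"
proof -
  interpret vsp A ad s zz by (rule vsp.intro) (rule vs)
  have ha': "\<And>a b. a \<in> A \<Longrightarrow> b \<in> A \<Longrightarrow> ad' (g a) (g b) = g (ad a b)" using ha by blast
  have hs': "\<And>c a. a \<in> A \<Longrightarrow> s' c (g a) = g (s c a)" using hs by blast
  show ?thesis unfolding vs_on_def
  proof (intro conjI)
    show "zz' \<in> g ` A" using hz zin by blast
    show "\<forall>x\<in>g ` A. \<forall>y\<in>g ` A. ad' x y \<in> g ` A"
      by (auto simp: ha' ad_cl)
    show "\<forall>c. \<forall>x\<in>g ` A. s' c x \<in> g ` A"
      by (auto simp: hs' s_cl)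
    show "\<forall>x\<in>g ` A. \<forall>y\<in>g ` A. \<forall>u\<in>g ` A. ad' (ad' x y) u = ad' x (ad' y u)"
      by (auto simp: ha' ad_cl assoc)
    show "\<forall>x\<in>g ` A. \<forall>y\<in>g ` A. ad' x y = ad' y x"
    proof (intro ballI)
      fix x y assume "x \<in> g ` A" "y \<in> g ` A"
      then obtain a b where "a \<in> A" "b \<in> A" "x = g a" "y = g b" by blast
      then show "ad' x y = ad' y x" using ha' comm by metis
    qed
    show "\<forall>x\<in>g ` A. ad' zz' x = x"
    proof
      fix x assume "x \<in> g ` A"
      then obtain a where "a \<in> A" "x = g a" by blast
      then show "ad' zz' x = x" using ha' zl zin hz by metis
    qed
    show "\<forall>x\<in>g ` A. \<exists>y\<in>g ` A. ad' x y = zz'"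
    proof
      fix x assume "x \<in> g ` A"
      then obtain a where a: "a \<in> A" "x = g a" by blast
      obtain b where b: "b \<in> A" "ad a b = zz" using inv[OF a(1)] by blast
      have "ad' x (g b) = zz'" using a b ha' hz by simp
      then show "\<exists>y\<in>g ` A. ad' x y = zz'" using b(1) by blast
    qed
    show "\<forall>c. \<forall>x\<in>g ` A. \<forall>y\<in>g ` A. s' c (ad' x y) = ad' (s' c x) (s' c y)"
      by (auto simp: ha' hs' ad_cl s_cl dist1)
    show "\<forall>c d. \<forall>x\<in>g ` A. s' (c + d) x = ad' (s' c x) (s' d x)"
      by (auto simp: ha' hs' s_cl dist2)
    show "\<forall>c d. \<forall>x\<in>g ` A. s' (c * d) x = s' c (s' d x)"
      by (auto simp: hs' s_cl smul)
    show "\<forall>x\<in>g ` A. s' 1 x = x"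
      by (auto simp: hs' s1)
  qed
qed

definition hmap :: "('v \<Rightarrow> 'v) \<Rightarrow> ('v \<times> 'a \<times> 'v) \<Rightarrow> ('v \<times> 'a \<times> 'v)" where
  "hmap f = (\<lambda>(x, a, y). (f x, a, f y))"

lemma merge_alt: "merge_vertices V E v w = (\<lambda>j. (\<lambda>x. if x = v then w else x) ` V j,
   \<lambda>j. hmap (\<lambda>x. if x = v then w else x) ` E j)"
  unfolding merge_vertices_def hmap_def Let_def by simp

lemma hmap_comp: "hmap f ` hmap g ` A = hmap (f \<circ> g) ` A"
  unfolding hmap_def image_image by (intro image_cong) auto

lemma hmap_comp2: "hmap f \<circ> hmap g = hmap (f \<circ> g)"
  unfolding hmap_def by auto

lemma hmap_id: "hmap (\<lambda>x. x) ` A = A"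
  unfolding hmap_def by (simp add: case_prod_unfold)

lemma merge_seq:
  assumes i: "i < n" and piV: "\<forall>x\<in>V i. pi x \<in> V i" and fin: "finite S"
    and S: "S \<subseteq> V i - pi ` V i"
  shows "(merge_step n)\<^sup>*\<^sup>* (V, E) (\<lambda>j. (\<lambda>x. if x \<in> S then pi x else x) ` V j,
            \<lambda>j. hmap (\<lambda>x. if x \<in> S then pi x else x) ` E j)"
  using fin S
proof (induction S rule: finite_induct)
  case empty
  then show ?case by (simp add: hmap_id)
next
  case (insert x S)
  define G where "G = (\<lambda>x. if x \<in> S then pi x else x)"
  define T where "T = (\<lambda>j. G ` V j, \<lambda>j. hmap G ` E j)"
  have IH: "(merge_step n)\<^sup>*\<^sup>* (V, E) T" using insert unfolding T_def G_def by auto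
  have xV: "x \<in> V i" "x \<notin> pi ` V i" using insert.prems by auto
  have pxV: "pi x \<in> V i" using piV xV by blast
  have pxS: "pi x \<notin> S" using insert.prems pxV by blast
  have neq: "x \<noteq> pi x" using xV by blast
  have Gx: "G x = x" using insert.hyps(2) unfolding G_def by simp
  have Gpx: "G (pi x) = pi x" using pxS unfolding G_def by simp
  have comp: "(\<lambda>y. if y = x then pi x else y) \<circ> G = (\<lambda>y. if y \<in> insert x S then pi y else y)"
  proof
    fix y show "((\<lambda>y. if y = x then pi x else y) \<circ> G) y = (if y \<in> insert x S then pi y else y)"
      using insert.prems xV insert.hyps(2) unfolding G_def by auto
  qed
  have step: "merge_step n T (merge_vertices (fst T) (snd T) x (pi x))"
  proof -
    have a: "x \<in> fst T i" unfolding T_def using Gx xV by (metis fst_conv image_eqI)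
    have b: "pi x \<in> fst T i" unfolding T_def using Gpx pxV by (metis fst_conv image_eqI)
    show ?thesis unfolding merge_step_def using i a b neq by blast
  qed
  have eq: "merge_vertices (fst T) (snd T) x (pi x) =
     (\<lambda>j. (\<lambda>y. if y \<in> insert x S then pi y else y) ` V j,
      \<lambda>j. hmap (\<lambda>y. if y \<in> insert x S then pi y else y) ` E j)"
    unfolding merge_alt T_def fst_conv snd_conv by (simp only: hmap_comp2 image_comp comp)
  show ?case using IH step eq by (metis rtranclp.rtrancl_into_rtrancl)
qed




lemma hmap_memI: "(a, b, c) \<in> A \<Longrightarrow> (f a, b, f c) \<in> hmap f ` A"
  unfolding hmap_def by (rule image_eqI[where x="(a,b,c)"]) auto

lemma hmap_memE: "(x, b, y) \<in> hmap f ` A \<Longrightarrow> \<exists>a c. (a, b, c) \<in> A \<and> x = f a \<and> y = f c"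
  unfolding hmap_def by auto

locale S =
  fixes n :: nat and V :: "nat \<Rightarrow> 'v set" and E :: "nat \<Rightarrow> ('v \<times> 'a::field \<times> 'v) set"
    and add :: "nat \<Rightarrow> 'v \<Rightarrow> 'v \<Rightarrow> 'v" and sm :: "nat \<Rightarrow> 'a \<Rightarrow> 'v \<Rightarrow> 'v" and z :: "nat \<Rightarrow> 'v"
    and i :: nat and v w :: 'v
  assumes tr: "trellis n V E"
    and L: "\<forall>j<n. vs_on (V j) (add j) (sm j) (z j)
          \<and> (z j, 0, z (Suc j mod n)) \<in> E j
          \<and> (\<forall>v a w v' a' w'. (v, a, w) \<in> E j \<longrightarrow> (v', a', w') \<in> E j \<longrightarrow>
                (add j v v', a + a', add (Suc j mod n) w w') \<in> E j)
          \<and> (\<forall>c v a w. (v, a, w) \<in> E j \<longrightarrow>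
                (sm j c v, c * a, sm (Suc j mod n) c w) \<in> E j)"
    and i: "i < n" and v: "v \<in> V i" and w: "w \<in> V i" and vw: "v \<noteq> w"
    and mc: "code n (snd (merge_vertices V E v w)) = code n E"
    and ar: "almost_reduced n V E"
begin

lemma vsj: "j < n \<Longrightarrow> vsp (V j) (add j) (sm j) (z j)" using L by (simp add: vsp_def)

sublocale A: vsp "V i" "add i" "sm i" "z i" using vsj i .

lemma Ez: "j < n \<Longrightarrow> (z j, 0, z (Suc j mod n)) \<in> E j" using L by blast
lemma Eadd: "j < n \<Longrightarrow> (a, b, c) \<in> E j \<Longrightarrow> (a', b', c') \<in> E j \<Longrightarrow>
   (add j a a', b + b', add (Suc j mod n) c c') \<in> E j" using L by blast
lemma Esm: "j < n \<Longrightarrow> (a, b, c) \<in> E j \<Longrightarrow> (sm j k a, k * b, sm (Suc j mod n) k c) \<in> E j"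
  using L by blast
lemma eV: "j < n \<Longrightarrow> (a, b, c) \<in> E j \<Longrightarrow> a \<in> V j \<and> c \<in> V (Suc j mod n)"
  using tr unfolding trellis_def by blast
lemma disj: "j < n \<Longrightarrow> j \<noteq> i \<Longrightarrow> x \<in> V j \<Longrightarrow> x \<notin> V i"
  using tr i unfolding trellis_def by blast
lemma fin: "j < n \<Longrightarrow> finite (V j)" using tr unfolding trellis_def by blast
lemma n1: "n \<ge> 1" using tr unfolding trellis_def by blast
lemma out: "j < n \<Longrightarrow> x \<in> V j \<Longrightarrow> \<exists>a y. (x, a, y) \<in> E j" using tr unfolding trellis_def by blast
lemma inc: "j < n \<Longrightarrow> x \<in> V j \<Longrightarrow> \<exists>u a. (u, a, x) \<in> E ((j + n - 1) mod n)"
  using tr unfolding trellis_def by blast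

definition "d = add i v (sm i (-1) w)"
lemma d_in: "d \<in> V i" unfolding d_def using A.ad_cl A.s_cl v w by blast

definition "pi = A.pr d"
definition "g x = (if x \<in> V i then pi x else x)"

lemma pi_V: "x \<in> V i \<Longrightarrow> pi x \<in> V i" unfolding pi_def using A.pr_A d_in by blast
lemma g_other: "j < n \<Longrightarrow> j \<noteq> i \<Longrightarrow> x \<in> V j \<Longrightarrow> g x = x" unfolding g_def using disj by auto
lemma g_i: "x \<in> V i \<Longrightarrow> g x = pi x" unfolding g_def by simp
lemma gV: "j < n \<Longrightarrow> x \<in> V j \<Longrightarrow> g x \<in> V j"
  by (cases "j = i") (auto simp: g_i pi_V g_other)

definition "add' j = (if j = i then (\<lambda>a b. pi (add i a b)) else add j)"
definition "sm' j = (if j = i then (\<lambda>c a. pi (sm i c a)) else sm j)"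
definition "z' j = (if j = i then pi (z i) else z j)"

lemma hom_add: assumes j: "j < n" and a: "a \<in> V j" and b: "b \<in> V j"
  shows "add' j (g a) (g b) = g (add j a b)"
proof (cases "j = i")
  case True
  then have ab: "a \<in> V i" "b \<in> V i" using a b by auto
  have "add i (pi a) (pi b) \<in> A.cs d (add i a b)"
    unfolding pi_def by (rule A.cs_add) (use ab d_in A.pr_in in auto)
  then have "pi (add i (pi a) (pi b)) = pi (add i a b)"
    unfolding pi_def using A.pr_eq A.ad_cl ab d_in by blast
  then show ?thesis using True ab A.ad_cl by (simp add: add'_def g_i)
next
  case False
  then show ?thesis using j a b vsp.ad_cl[OF vsj[OF j]] by (simp add: add'_def g_other)
qed

lemma hom_sm: assumes j: "j < n" and a: "a \<in> V j"
  shows "sm' j c (g a) = g (sm j c a)"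
proof (cases "j = i")
  case True
  then have ab: "a \<in> V i" using a by auto
  have "sm i c (pi a) \<in> A.cs d (sm i c a)"
    unfolding pi_def by (rule A.cs_sm) (use ab d_in A.pr_in in auto)
  then have "pi (sm i c (pi a)) = pi (sm i c a)"
    unfolding pi_def using A.pr_eq A.s_cl ab d_in by blast
  then show ?thesis using True ab A.s_cl by (simp add: sm'_def g_i)
next
  case False
  then show ?thesis using j a vsp.s_cl[OF vsj[OF j]] by (simp add: sm'_def g_other)
qed

lemma hom_z: "j < n \<Longrightarrow> z' j = g (z j)"
  using vsp.zin[OF vsj] by (cases "j = i") (auto simp: z'_def g_i g_other)

definition "V' j = g ` V j"
definition "E' j = hmap g ` E j"

lemma V'_sub: "j < n \<Longrightarrow> V' j \<subseteq> V j" unfolding V'_def using gV by blast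

lemma lin: "linear_trellis n V' E'"
  unfolding linear_trellis_def
proof (intro conjI)
  show "trellis n V' E'"
    unfolding trellis_def
  proof (intro conjI allI impI ballI)
    show "1 \<le> n" using n1 .
    fix j assume j: "j < n"
    show "finite (V' j)" using fin[OF j] unfolding V'_def by simp
    show "E' j \<subseteq> V' j \<times> UNIV \<times> V' (Suc j mod n)"
    proof
      fix e assume "e \<in> E' j"
      then obtain a b c where "(a,b,c) \<in> E j" "e = (g a, b, g c)" unfolding E'_def hmap_def by auto
      then show "e \<in> V' j \<times> UNIV \<times> V' (Suc j mod n)" using eV[OF j] unfolding V'_def by auto
    qed
    {
      fix k assume k: "k < n" "j \<noteq> k"
      show "V' j \<inter> V' k = {}" using V'_sub[OF j] V'_sub[OF k(1)] tr j k unfolding trellis_def by blast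
    }
    fix x assume "x \<in> V' j"
    then obtain y where y: "y \<in> V j" "x = g y" unfolding V'_def by blast
    obtain a u where "(y, a, u) \<in> E j" using out[OF j y(1)] by blast
    then have "(g y, a, g u) \<in> E' j" unfolding E'_def by (rule hmap_memI)
    then show "\<exists>a w. (x, a, w) \<in> E' j" using y by blast
    obtain a u where "(u, a, y) \<in> E ((j + n - 1) mod n)" using inc[OF j y(1)] by blast
    then have "(g u, a, g y) \<in> E' ((j + n - 1) mod n)" unfolding E'_def by (rule hmap_memI)
    then show "\<exists>u a. (u, a, x) \<in> E' ((j + n - 1) mod n)" using y by blast
  qed
  show "\<exists>add sm z. \<forall>j<n. vs_on (V' j) (add j) (sm j) (z j)
          \<and> (z j, 0, z (Suc j mod n)) \<in> E' j
          \<and> (\<forall>v a w v' a' w'. (v, a, w) \<in> E' j \<longrightarrow> (v', a', w') \<in> E' j \<longrightarrow>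
                (add j v v', a + a', add (Suc j mod n) w w') \<in> E' j)
          \<and> (\<forall>c v a w. (v, a, w) \<in> E' j \<longrightarrow>
                (sm j c v, c * a, sm (Suc j mod n) c w) \<in> E' j)"
  proof (rule exI[of _ add'], rule exI[of _ sm'], rule exI[of _ z'], rule allI, rule impI, intro conjI)
    fix j assume j: "j < n"
    have j1: "Suc j mod n < n" using j by simp
    show "vs_on (V' j) (add' j) (sm' j) (z' j)" unfolding V'_def
      by (rule vs_image) (use L j hom_add[OF j] hom_sm[OF j] hom_z[OF j] in auto)
    show "(z' j, 0, z' (Suc j mod n)) \<in> E' j"
      unfolding hom_z[OF j] hom_z[OF j1] E'_def by (rule hmap_memI) (rule Ez[OF j])
    show "\<forall>v a w v' a' w'. (v, a, w) \<in> E' j \<longrightarrow> (v', a', w') \<in> E' j \<longrightarrow>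
                (add' j v v', a + a', add' (Suc j mod n) w w') \<in> E' j"
    proof (intro allI impI)
      fix x b y x' b' y' assume "(x, b, y) \<in> E' j" "(x', b', y') \<in> E' j"
      then obtain a c a' c' where e: "(a, b, c) \<in> E j" "x = g a" "y = g c"
        "(a', b', c') \<in> E j" "x' = g a'" "y' = g c'" unfolding E'_def by (metis hmap_memE)
      have "(g (add j a a'), b + b', g (add (Suc j mod n) c c')) \<in> E' j"
        unfolding E'_def by (rule hmap_memI) (rule Eadd[OF j e(1) e(4)])
      moreover have "add' j x x' = g (add j a a')" using e eV[OF j] hom_add[OF j] by simp
      moreover have "add' (Suc j mod n) y y' = g (add (Suc j mod n) c c')"
        using e eV[OF j] hom_add[OF j1] by simp
      ultimately show "(add' j x x', b + b', add' (Suc j mod n) y y') \<in> E' j" by simp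
    qed
    show "\<forall>k x b y. (x, b, y) \<in> E' j \<longrightarrow> (sm' j k x, k * b, sm' (Suc j mod n) k y) \<in> E' j"
    proof (intro allI impI)
      fix k x b y assume "(x, b, y) \<in> E' j"
      then obtain a c where e: "(a, b, c) \<in> E j" "x = g a" "y = g c"
        unfolding E'_def by (metis hmap_memE)
      have "(g (sm j k a), k * b, g (sm (Suc j mod n) k c)) \<in> E' j"
        unfolding E'_def by (rule hmap_memI) (rule Esm[OF j e(1)])
      moreover have "sm' j k x = g (sm j k a)" using e eV[OF j] hom_sm[OF j] by simp
      moreover have "sm' (Suc j mod n) k y = g (sm (Suc j mod n) k c)"
        using e eV[OF j] hom_sm[OF j1] by simp
      ultimately show "(sm' j k x, k * b, sm' (Suc j mod n) k y) \<in> E' j" by simp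
    qed
  qed
qed

end



context S begin

definition "p = (i + n - 1) mod n"

lemma p_lt: "p < n" unfolding p_def using n1 by simp

lemma Sp: "Suc p mod n = i"
proof (cases i)
  case 0
  then have "p = n - 1" unfolding p_def using n1 by simp
  then show ?thesis using 0 n1 by simp
next
  case (Suc k)
  then have "p = k" unfolding p_def using i by simp
  then show ?thesis using Suc i by simp
qed

lemma Sj: assumes j: "j < n" and e: "Suc j mod n = i" shows "j = p"
proof (cases "Suc j = n")
  case True
  then have "i = 0" using e by simp
  then show ?thesis unfolding p_def using True by simp
next
  case False
  then have "Suc j < n" using j by simp
  then have "i = Suc j" using e by simp
  then show ?thesis unfolding p_def using \<open>Suc j < n\<close> by simp
qed

definition genc :: "'a \<Rightarrow> 'a list \<Rightarrow> (nat \<Rightarrow> 'v) \<Rightarrow> (nat \<Rightarrow> 'v) \<Rightarrow> bool" where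
  "genc k c x y \<longleftrightarrow> length c = n \<and> (\<forall>j<n. (x j, c ! j, y j) \<in> E j)
     \<and> (\<forall>j<n. j \<noteq> p \<longrightarrow> y j = x (Suc j mod n)) \<and> y p = add i (x i) (sm i k d)"

lemma genc_xi: "genc k c x y \<Longrightarrow> x i \<in> V i"
  unfolding genc_def using eV i by blast

lemma genc_sum:
  assumes G1: "genc k c x y" and G2: "genc k' c' x' y'"
  shows "genc (k + k') (map2 (+) c c') (\<lambda>j. add j (x j) (x' j)) (\<lambda>j. add (Suc j mod n) (y j) (y' j))"
  unfolding genc_def
proof (intro conjI allI impI)
  show "length (map2 (+) c c') = n" using G1 G2 unfolding genc_def by simp
  fix j assume j: "j < n"
  have "(add j (x j) (x' j), c ! j + c' ! j, add (Suc j mod n) (y j) (y' j)) \<in> E j"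
    using Eadd[OF j] G1 G2 j unfolding genc_def by blast
  then show "(add j (x j) (x' j), map2 (+) c c' ! j, add (Suc j mod n) (y j) (y' j)) \<in> E j"
    using G1 G2 j unfolding genc_def by simp
  assume "j \<noteq> p"
  then show "add (Suc j mod n) (y j) (y' j) = add (Suc j mod n) (x (Suc j mod n)) (x' (Suc j mod n))"
    using G1 G2 j unfolding genc_def by simp
next
  have xi: "x i \<in> V i" "x' i \<in> V i" using genc_xi G1 G2 by auto
  have "add (Suc p mod n) (y p) (y' p) = add i (add i (x i) (sm i k d)) (add i (x' i) (sm i k' d))"
    using G1 G2 Sp unfolding genc_def by simp
  also have "\<dots> = add i (add i (x i) (x' i)) (add i (sm i k d) (sm i k' d))"
    using A.shuf xi A.s_cl d_in by blast
  also have "\<dots> = add i (add i (x i) (x' i)) (sm i (k + k') d)"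
    using A.dist2 d_in by simp
  finally show "add (Suc p mod n) (y p) (y' p) = add i (add i (x i) (x' i)) (sm i (k + k') d)" .
qed

lemma genc_scale:
  assumes G1: "genc k c x y"
  shows "genc (a * k) (map ((*) a) c) (\<lambda>j. sm j a (x j)) (\<lambda>j. sm (Suc j mod n) a (y j))"
  unfolding genc_def
proof (intro conjI allI impI)
  show "length (map ((*) a) c) = n" using G1 unfolding genc_def by simp
  fix j assume j: "j < n"
  have "(sm j a (x j), a * c ! j, sm (Suc j mod n) a (y j)) \<in> E j"
    using Esm[OF j] G1 j unfolding genc_def by blast
  then show "(sm j a (x j), map ((*) a) c ! j, sm (Suc j mod n) a (y j)) \<in> E j"
    using G1 j unfolding genc_def by simp
  assume "j \<noteq> p"
  then show "sm (Suc j mod n) a (y j) = sm (Suc j mod n) a (x (Suc j mod n))"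
    using G1 j unfolding genc_def by simp
next
  have xi: "x i \<in> V i" using genc_xi G1 by auto
  have "sm (Suc p mod n) a (y p) = sm i a (add i (x i) (sm i k d))"
    using G1 Sp unfolding genc_def by simp
  also have "\<dots> = add i (sm i a (x i)) (sm i a (sm i k d))"
    using A.dist1 xi A.s_cl d_in by blast
  also have "\<dots> = add i (sm i a (x i)) (sm i (a * k) d)"
    using A.smul d_in by simp
  finally show "sm (Suc p mod n) a (y p) = add i (sm i a (x i)) (sm i (a * k) d)" .
qed

lemma cyc_genc: assumes C: "is_cycle n E vs c"
  shows "genc 0 c (\<lambda>j. vs ! j) (\<lambda>j. vs ! (Suc j mod n))"
  unfolding genc_def
proof (intro conjI allI impI)
  show "length c = n" using C unfolding is_cycle_def by simp
  fix j assume "j < n" then show "(vs ! j, c ! j, vs ! (Suc j mod n)) \<in> E j"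
    using C unfolding is_cycle_def by simp
next
  have "vs ! i \<in> V i" using C i eV unfolding is_cycle_def by blast
  then show "vs ! (Suc p mod n) = add i (vs ! i) (sm i 0 d)"
    using Sp A.s0 A.zr d_in by simp
qed simp

lemma genc0_code: assumes G: "genc 0 c x y" shows "c \<in> code n E"
proof -
  have xi: "x i \<in> V i" using genc_xi G by auto
  have "is_cycle n E (map x [0..<n]) c"
    unfolding is_cycle_def
  proof (intro conjI allI impI)
    show "length (map x [0..<n]) = n" by simp
    show "length c = n" using G unfolding genc_def by simp
    fix j assume j: "j < n"
    have yj: "y j = x (Suc j mod n)"
    proof (cases "j = p")
      case True
      then show ?thesis using G Sp xi A.s0 A.zr d_in unfolding genc_def by simp
    next
      case False then show ?thesis using G j unfolding genc_def by simp
    qed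
    have "Suc j mod n < n" using j by simp
    moreover have "(x j, c ! j, y j) \<in> E j" using G j unfolding genc_def by blast
    ultimately show "(map x [0..<n] ! j, c ! j, map x [0..<n] ! (Suc j mod n)) \<in> E j"
      using j yj by simp
  qed
  then show ?thesis unfolding code_def by blast
qed

lemma genc1_merged: assumes G: "genc 1 c x y" and xw: "x i = w"
  shows "c \<in> code n (snd (merge_vertices V E v w))"
proof -
  define f where "f = (\<lambda>x. if x = v then w else x)"
  have sndm: "snd (merge_vertices V E v w) = (\<lambda>j. hmap f ` E j)" unfolding merge_alt f_def by simp
  have yp: "y p = v" using G xw A.s1 d_in A.sub_cancel v w unfolding genc_def d_def by simp
  have "is_cycle n (\<lambda>j. hmap f ` E j) (map (\<lambda>j. f (x j)) [0..<n]) c"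
    unfolding is_cycle_def
  proof (intro conjI allI impI)
    show "length (map (\<lambda>j. f (x j)) [0..<n]) = n" by simp
    show "length c = n" using G unfolding genc_def by simp
    fix j assume j: "j < n"
    have yj: "f (y j) = f (x (Suc j mod n))"
    proof (cases "j = p")
      case True
      then show ?thesis using yp Sp xw vw unfolding f_def by simp
    next
      case False then show ?thesis using G j unfolding genc_def by simp
    qed
    have e: "(f (x j), c ! j, f (y j)) \<in> hmap f ` E j"
      by (rule hmap_memI) (use G j in \<open>simp add: genc_def\<close>)
    have "Suc j mod n < n" using j by simp
    then show "(map (\<lambda>j. f (x j)) [0..<n] ! j, c ! j, map (\<lambda>j. f (x j)) [0..<n] ! (Suc j mod n))
       \<in> hmap f ` E j"
      using e yj j by simp
  qed
  then show ?thesis unfolding sndm code_def by blast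
qed

lemma code_genc: "c \<in> code n E \<Longrightarrow> \<exists>x y. genc 0 c x y"
  unfolding code_def using cyc_genc by blast

lemma code_add: assumes "c \<in> code n E" "c' \<in> code n E" shows "map2 (+) c c' \<in> code n E"
proof -
  obtain x y x' y' where "genc 0 c x y" "genc 0 c' x' y'" using code_genc assms by blast
  from genc_sum[OF this] show ?thesis using genc0_code by simp
qed

lemma code_scale: assumes "c \<in> code n E" shows "map ((*) a) c \<in> code n E"
proof -
  obtain x y where "genc 0 c x y" using code_genc assms by blast
  from genc_scale[OF this, of a] show ?thesis using genc0_code by simp
qed

lemma genc_code: assumes G: "genc k c x y" shows "c \<in> code n E"
proof (cases "k = 0")
  case True then show ?thesis using G genc0_code by simp
next
  case False
  define c1 where "c1 = map ((*) (inverse k)) c"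
  define x1 where "x1 = (\<lambda>j. sm j (inverse k) (x j))"
  have G1: "genc 1 c1 x1 (\<lambda>j. sm (Suc j mod n) (inverse k) (y j))"
    using genc_scale[OF G, of "inverse k"] False unfolding c1_def x1_def by simp
  have xx: "x1 i \<in> V i" using genc_xi G1 by blast
  define u where "u = add i w (sm i (-1) (x1 i))"
  have u: "u \<in> V i" unfolding u_def using A.ad_cl A.s_cl xx w by blast
  obtain vs cz where cz: "is_cycle n E vs cz" "vs ! i = u" using ar u i unfolding almost_reduced_def by blast
  have Gz: "genc 0 cz (\<lambda>j. vs ! j) (\<lambda>j. vs ! (Suc j mod n))" by (rule cyc_genc[OF cz(1)])
  obtain y2 where Gs: "genc 1 (map2 (+) c1 cz) (\<lambda>j. add j (x1 j) (vs ! j)) y2"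
    using genc_sum[OF G1 Gz] by auto
  have "add i (x1 i) (vs ! i) = w" using cz(2) A.sub_cancel xx w unfolding u_def by simp
  then have "map2 (+) c1 cz \<in> code n (snd (merge_vertices V E v w))"
    using genc1_merged Gs by simp
  then have s: "map2 (+) c1 cz \<in> code n E" using mc by simp
  have czc: "cz \<in> code n E" using cz unfolding code_def by blast
  have lc1: "length c1 = n" and lcz: "length cz = n"
    using G1 Gz unfolding genc_def by auto
  have "map2 (+) (map2 (+) c1 cz) (map ((*) (-1)) cz) = c1"
    by (rule nth_equalityI) (use lc1 lcz in auto)
  then have "c1 \<in> code n E" using code_add[OF s code_scale[OF czc, of "-1"]] by simp
  then have "map ((*) k) c1 \<in> code n E" by (rule code_scale)
  moreover have "map ((*) k) c1 = c"
  proof -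
    have h: "\<And>a. k * (inverse k * a) = a" using False by (simp add: mult.assoc[symmetric])
    show ?thesis unfolding c1_def by (simp add: comp_def h)
  qed
  ultimately show ?thesis by simp
qed

end



context S begin

lemma code_eq: "code n E' = code n E"
proof
  show "code n E' \<subseteq> code n E"
  proof
    fix c assume "c \<in> code n E'"
    then obtain vs where C: "is_cycle n E' vs c" unfolding code_def by blast
    have "\<forall>j. \<exists>ab. j < n \<longrightarrow> (fst ab, c ! j, snd ab) \<in> E j \<and> vs ! j = g (fst ab)
            \<and> vs ! (Suc j mod n) = g (snd ab)"
    proof
      fix j show "\<exists>ab. j < n \<longrightarrow> (fst ab, c ! j, snd ab) \<in> E j \<and> vs ! j = g (fst ab)
            \<and> vs ! (Suc j mod n) = g (snd ab)"
      proof (cases "j < n")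
        case True
        then have "(vs ! j, c ! j, vs ! (Suc j mod n)) \<in> E' j" using C unfolding is_cycle_def by blast
        then obtain a b where "(a, c ! j, b) \<in> E j" "vs ! j = g a" "vs ! (Suc j mod n) = g b"
          unfolding E'_def by (metis hmap_memE)
        then show ?thesis by (intro exI[of _ "(a, b)"]) simp
      qed simp
    qed
    from choice[OF this] obtain f where f0: "\<forall>j. j < n \<longrightarrow> (fst (f j), c ! j, snd (f j)) \<in> E j \<and> vs ! j = g (fst (f j))
            \<and> vs ! (Suc j mod n) = g (snd (f j))" by blast
    have f: "\<And>j. j < n \<Longrightarrow> (fst (f j), c ! j, snd (f j)) \<in> E j \<and> vs ! j = g (fst (f j))
            \<and> vs ! (Suc j mod n) = g (snd (f j))" using f0 by blast
    define x where "x = (\<lambda>j. fst (f j))"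
    define y where "y = (\<lambda>j. snd (f j))"
    have e: "\<And>j. j < n \<Longrightarrow> (x j, c ! j, y j) \<in> E j" using f unfolding x_def y_def by blast
    have gx: "\<And>j. j < n \<Longrightarrow> vs ! j = g (x j)" using f unfolding x_def by blast
    have gy: "\<And>j. j < n \<Longrightarrow> vs ! (Suc j mod n) = g (y j)" using f unfolding y_def by blast
    have ny: "\<And>j. j < n \<Longrightarrow> j \<noteq> p \<Longrightarrow> y j = x (Suc j mod n)"
    proof -
      fix j assume j: "j < n" and jp: "j \<noteq> p"
      define m where "m = Suc j mod n"
      have m: "m < n" "m \<noteq> i" using j jp Sj unfolding m_def by auto
      have yV: "y j \<in> V m" using eV[OF j e[OF j]] unfolding m_def by blast
      have xV: "x m \<in> V m" using eV[OF m(1) e[OF m(1)]] by blast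
      have "g (y j) = g (x m)" using gy[OF j] gx[OF m(1)] unfolding m_def by simp
      moreover have "g (y j) = y j" by (rule g_other[OF m(1) m(2) yV])
      moreover have "g (x m) = x m" by (rule g_other[OF m(1) m(2) xV])
      ultimately show "y j = x (Suc j mod n)" unfolding m_def by simp
    qed
    have yV: "y p \<in> V i" "x i \<in> V i" using eV[OF p_lt e[OF p_lt]] Sp eV[OF i e[OF i]] by auto
    have "pi (x i) = pi (y p)" using gx[OF i] gy[OF p_lt] Sp g_i yV by simp
    then have "y p \<in> A.cs d (x i)" using A.pr_inv yV d_in unfolding pi_def by blast
    then obtain k where k: "y p = add i (x i) (sm i k d)" unfolding A.cs_def by blast
    have lc: "length c = n" using C unfolding is_cycle_def by simp
    have "genc k c x y" unfolding genc_def using lc e ny k by blast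
    then show "c \<in> code n E" by (rule genc_code)
  qed
  show "code n E \<subseteq> code n E'"
  proof
    fix c assume "c \<in> code n E"
    then obtain vs where C: "is_cycle n E vs c" unfolding code_def by blast
    have "is_cycle n E' (map g vs) c" unfolding is_cycle_def
    proof (intro conjI allI impI)
      show "length (map g vs) = n" "length c = n" using C unfolding is_cycle_def by auto
      fix j assume j: "j < n"
      have "(vs ! j, c ! j, vs ! (Suc j mod n)) \<in> E j" using C j unfolding is_cycle_def by blast
      then have "(g (vs ! j), c ! j, g (vs ! (Suc j mod n))) \<in> E' j" unfolding E'_def by (rule hmap_memI)
      moreover have "Suc j mod n < n" using j by simp
      ultimately show "(map g vs ! j, c ! j, map g vs ! (Suc j mod n)) \<in> E' j"
        using C j unfolding is_cycle_def by simp
    qed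
    then show "c \<in> code n E'" unfolding code_def by blast
  qed
qed

lemma sm_res: "smaller n V' V"
  unfolding smaller_def
proof (intro conjI)
  show "\<forall>j<n. card (V' j) \<le> card (V j)" using V'_sub fin by (simp add: card_mono)
  have "v \<in> A.cs d w"
  proof -
    have "add i w (sm i 1 d) = v" using A.s1 d_in A.sub_cancel v w unfolding d_def by simp
    then show ?thesis unfolding A.cs_def by (metis (mono_tags) mem_Collect_eq)
  qed
  then have "pi v = pi w" unfolding pi_def using A.pr_eq w d_in by blast
  then have "g v = g w" using g_i v w by simp
  then have "\<not> inj_on g (V i)" using v w vw unfolding inj_on_def by blast
  then have "card (V' i) \<noteq> card (V i)" using inj_on_iff_eq_card[OF fin[OF i]] unfolding V'_def by blast
  moreover have "card (V' i) \<le> card (V i)" using V'_sub[OF i] fin[OF i] by (simp add: card_mono)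
  ultimately show "\<exists>j<n. card (V' j) < card (V j)" using i by (intro exI[of _ i]) simp
qed

lemma steps: "(merge_step n)\<^sup>*\<^sup>* (V, E) (V', E')"
proof -
  define S where "S = V i - pi ` V i"
  have ms: "(merge_step n)\<^sup>*\<^sup>* (V, E) (\<lambda>j. (\<lambda>x. if x \<in> S then pi x else x) ` V j,
            \<lambda>j. hmap (\<lambda>x. if x \<in> S then pi x else x) ` E j)"
    by (rule merge_seq[OF i]) (use pi_V fin[OF i] in \<open>auto simp: S_def\<close>)
  have eq: "(\<lambda>x. if x \<in> S then pi x else x) = g"
  proof
    fix x show "(if x \<in> S then pi x else x) = g x"
    proof (cases "x \<in> V i \<and> x \<in> pi ` V i")
      case True
      then obtain y where "y \<in> V i" "x = pi y" by blast
      then have "pi x = x" unfolding pi_def using A.pr_idem d_in by blast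
      then show ?thesis using True unfolding S_def g_def by auto
    next
      case False
      then show ?thesis unfolding S_def g_def by auto
    qed
  qed
  show ?thesis unfolding V'_def E'_def using ms unfolding eq .
qed

lemma result: "\<exists>V' E'. (merge_step n)\<^sup>*\<^sup>* (V, E) (V', E')
           \<and> linear_trellis n V' E' \<and> code n E' = code n E \<and> smaller n V' V"
  using steps lin code_eq sm_res by blast

end

theorem mainTheorem12:
  fixes n :: nat
    and V :: "nat \<Rightarrow> 'v set"
    and E :: "nat \<Rightarrow> ('v \<times> 'a::{field,finite} \<times> 'v) set"
  assumes "linear_trellis n V E"
    and "almost_reduced n V E"
    and "mergeable n V E"
  shows "\<exists>V' E'. (merge_step n)\<^sup>*\<^sup>* (V, E) (V', E')
           \<and> linear_trellis n V' E' \<and> code n E' = code n E \<and> smaller n V' V"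
proof -
  from assms(1) obtain add sm z where tr: "trellis n V E" and L: "\<forall>i<n. vs_on (V i) (add i) (sm i) (z i)
          \<and> (z i, 0, z (Suc i mod n)) \<in> E i
          \<and> (\<forall>v a w v' a' w'. (v, a, w) \<in> E i \<longrightarrow> (v', a', w') \<in> E i \<longrightarrow>
                (add i v v', a + a', add (Suc i mod n) w w') \<in> E i)
          \<and> (\<forall>c v a w. (v, a, w) \<in> E i \<longrightarrow>
                (sm i c v, c * a, sm (Suc i mod n) c w) \<in> E i)"
    unfolding linear_trellis_def by blast
  from assms(3) obtain i v w where "i < n" "v \<in> V i" "w \<in> V i" "v \<noteq> w"
    "code n (snd (merge_vertices V E v w)) = code n E" unfolding mergeable_def by blast
  then interpret S n V E add sm z i v w
    using tr L assms(2) by (unfold_locales) auto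
  show ?thesis by (rule result)
qed


end
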